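(* Let $\preceq$ be a partial order on a nonempty set $S_0$, let $n \ge 1$, and let $S = S_0^n$ carry the component-wise partial order ($a \preceq b$ iff $a_i \preceq b_i$ for all $i$). Let $\mathcal{G}$ be a subgroup of the symmetric group $\mathcal{S}_n$, acting on $S$ by permuting coordinates, $\sigma a = (a_{\sigma(i)})_{i}$. Then on the set $S/\mathcal{G}$ of orbits, the strong relation ($A \preceq B$ iff for all $a \in A$ there is $b \in B$ with $a \preceq b$) and the weak relation ($A \preceq B$ iff there exist $a \in A$, $b \in B$ with $a \preceq b$) are identical, and this relation is a partial order on $S/\mathcal{G}$. *)

theory Defs
  imports "HOL-Algebra.Sym_Groups" "HOL-Library.FuncSet"
begin

definition prod_space :: "nat \<Rightarrow> 'a set \<Rightarrow> (nat \<Rightarrow> 'a) set" where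
  "prod_space n S0 = PiE {1..n} (\<lambda>_. S0)"

definition cw_le :: "nat \<Rightarrow> 'a rel \<Rightarrow> (nat \<Rightarrow> 'a) \<Rightarrow> (nat \<Rightarrow> 'a) \<Rightarrow> bool" where
  "cw_le n r a b \<longleftrightarrow> (\<forall>i\<in>{1..n}. (a i, b i) \<in> r)"

definition perm_act :: "(nat \<Rightarrow> nat) \<Rightarrow> (nat \<Rightarrow> 'a) \<Rightarrow> (nat \<Rightarrow> 'a)" where
  "perm_act \<sigma> a = (\<lambda>i. a (\<sigma> i))"

definition orbit_of :: "(nat \<Rightarrow> nat) set \<Rightarrow> (nat \<Rightarrow> 'a) \<Rightarrow> (nat \<Rightarrow> 'a) set" where
  "orbit_of G a = (\<lambda>\<sigma>. perm_act \<sigma> a) ` G"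

definition orbit_space :: "(nat \<Rightarrow> nat) set \<Rightarrow> (nat \<Rightarrow> 'a) set \<Rightarrow> (nat \<Rightarrow> 'a) set set" where
  "orbit_space G S = orbit_of G ` S"

definition strong_rel :: "('b \<Rightarrow> 'b \<Rightarrow> bool) \<Rightarrow> 'b set \<Rightarrow> 'b set \<Rightarrow> bool" where
  "strong_rel R A B \<longleftrightarrow> (\<forall>a\<in>A. \<exists>b\<in>B. R a b)"

definition weak_rel :: "('b \<Rightarrow> 'b \<Rightarrow> bool) \<Rightarrow> 'b set \<Rightarrow> 'b set \<Rightarrow> bool" where
  "weak_rel R A B \<longleftrightarrow> (\<exists>a\<in>A. \<exists>b\<in>B. R a b)"

end

theory Submission
  imports Defs "HOL-Algebra.Multiplicative_Group"
begin

lemma G_facts: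
  assumes "subgroup G (sym_group n)"
  shows "\<And>s. s \<in> G \<Longrightarrow> s permutes {1..n}"
    and "\<And>s t. s \<in> G \<Longrightarrow> t \<in> G \<Longrightarrow> s \<circ> t \<in> G"
    and "\<And>s. s \<in> G \<Longrightarrow> inv' s \<in> G"
    and "id \<in> G"
proof -
  interpret subgroup G "sym_group n" by fact
  show "\<And>s. s \<in> G \<Longrightarrow> s permutes {1..n}" using subset sym_group_carrier by blast
  show "\<And>s t. s \<in> G \<Longrightarrow> t \<in> G \<Longrightarrow> s \<circ> t \<in> G" using m_closed by (simp add: sym_group_mult)
  show "\<And>s. s \<in> G \<Longrightarrow> inv' s \<in> G" using m_inv_closed subset sym_group_inv_equality by fastforce
  show "id \<in> G" using one_closed by (simp add: sym_group_one)
qed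

lemma act_comp: "perm_act s (perm_act t a) = perm_act (t \<circ> s) a"
  by (simp add: perm_act_def)

lemma orbit_shift:
  assumes "subgroup G (sym_group n)" "s \<in> G"
  shows "orbit_of G (perm_act s b) = orbit_of G b"
proof
  show "orbit_of G (perm_act s b) \<subseteq> orbit_of G b"
    using G_facts[OF assms(1)] assms(2) by (auto simp: orbit_of_def act_comp)
  show "orbit_of G b \<subseteq> orbit_of G (perm_act s b)"
  proof
    fix x assume "x \<in> orbit_of G b"
    then obtain t where t: "t \<in> G" "x = perm_act t b" by (auto simp: orbit_of_def)
    have p: "s permutes {1..n}" using G_facts(1)[OF assms(1) assms(2)] .
    have "x = perm_act (inv' s \<circ> t) (perm_act s b)"
      using t permutes_inv_o(1)[OF p] by (simp add: act_comp o_assoc)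
    moreover have "inv' s \<circ> t \<in> G" using G_facts[OF assms(1)] assms(2) t(1) by blast
    ultimately show "x \<in> orbit_of G (perm_act s b)" by (auto simp: orbit_of_def)
  qed
qed

lemma act_in_space:
  assumes "s permutes {1..n}" "a \<in> prod_space n S0"
  shows "perm_act s a \<in> prod_space n S0"
proof -
  have "\<And>i. i \<in> {1..n} \<Longrightarrow> s i \<in> {1..n}" using permutes_in_image[OF assms(1)] by blast
  moreover have "\<And>i. i \<notin> {1..n} \<Longrightarrow> s i = i" using assms(1) by (simp add: permutes_def)
  ultimately show ?thesis using assms(2) unfolding prod_space_def perm_act_def PiE_def Pi_def extensional_def
    by auto
qed

lemma cw_act:
  assumes "s permutes {1..n}" "cw_le n r x y"
  shows "cw_le n r (perm_act s x) (perm_act s y)"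
  unfolding cw_le_def perm_act_def
proof
  fix i assume "i \<in> {1..n}"
  then have "s i \<in> {1..n}" using permutes_in_image[OF assms(1)] by blast
  then show "(x (s i), y (s i)) \<in> r" using assms(2) unfolding cw_le_def by blast
qed

lemma orbit_self: assumes "subgroup G (sym_group n)" shows "a \<in> orbit_of G a"
proof -
  have "id \<in> G" using G_facts(4)[OF assms] .
  then have "perm_act id a \<in> orbit_of G a" unfolding orbit_of_def by blast
  then show ?thesis by (simp add: perm_act_def)
qed

theorem corollary3:
  fixes S0 :: "'a set" and r :: "'a rel" and n :: nat and G :: "(nat \<Rightarrow> nat) set"
  assumes "S0 \<noteq> {}"
    and "partial_order_on S0 r"
    and "n \<ge> 1"
    and "subgroup G (sym_group n)"
  shows "(\<forall>A\<in>orbit_space G (prod_space n S0). \<forall>B\<in>orbit_space G (prod_space n S0).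
            strong_rel (cw_le n r) A B \<longleftrightarrow> weak_rel (cw_le n r) A B)
         \<and> partial_order_on (orbit_space G (prod_space n S0))
             {(A, B). A \<in> orbit_space G (prod_space n S0) \<and> B \<in> orbit_space G (prod_space n S0)
                      \<and> strong_rel (cw_le n r) A B}"
proof -
  let ?S = "prod_space n S0"
  let ?le = "cw_le n r"
  note GF = G_facts[OF assms(4)]
  have po: "refl_on S0 r" "trans r" "antisym r" using assms(2)
    by (auto simp: partial_order_on_def preorder_on_def)
  have inS0: "x i \<in> S0" if "x \<in> ?S" "i \<in> {1..n}" for x i
    using that by (auto simp: prod_space_def PiE_def Pi_def)
  have le_refl: "?le x x" if "x \<in> ?S" for x
    using inS0[OF that] po(1) by (auto simp: cw_le_def refl_on_def)
  have le_trans: "?le x z" if "?le x y" "?le y z" for x y z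
    using that po(2) unfolding cw_le_def trans_def by blast
  have le_antisym: "x = y" if "?le x y" "?le y x" "x \<in> ?S" "y \<in> ?S" for x y
  proof
    fix i show "x i = y i"
    proof (cases "i \<in> {1..n}")
      case True
      have "(x i, y i) \<in> r" "(y i, x i) \<in> r" using that(1,2) True unfolding cw_le_def by blast+
      thus ?thesis using antisymD[OF po(3)] by blast
    next
      case False
      have "x i = undefined" using PiE_arb[of x "{1..n}" "\<lambda>_. S0" i] that(3) False
        unfolding prod_space_def by blast
      moreover have "y i = undefined" using PiE_arb[of y "{1..n}" "\<lambda>_. S0" i] that(4) False
        unfolding prod_space_def by blast
      ultimately show ?thesis by simp
    qed
  qed
  have orbS: "x \<in> ?S" if o: "A = orbit_of G a" "x \<in> A" "a \<in> ?S" for A a x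
  proof -
    obtain s where "s \<in> G" "x = perm_act s a" using o(1,2) unfolding orbit_of_def by blast
    then show ?thesis using act_in_space[OF GF(1) o(3)] by blast
  qed
  have wk_st: "strong_rel ?le (orbit_of G a) (orbit_of G b)"
    if W: "weak_rel ?le (orbit_of G a) (orbit_of G b)" for a b
  proof -
    obtain a' b' where ab': "a' \<in> orbit_of G a" "b' \<in> orbit_of G b" "?le a' b'"
      using W unfolding weak_rel_def by blast
    obtain s where s: "s \<in> G" "a' = perm_act s a"
      using ab'(1) unfolding orbit_of_def by (rule imageE) simp
    obtain t where t: "t \<in> G" "b' = perm_act t b"
      using ab'(2) unfolding orbit_of_def by (rule imageE) simp
    have e1: "orbit_of G a = orbit_of G a'"
      unfolding s(2) by (rule orbit_shift[OF assms(4) s(1), symmetric])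
    have e2: "orbit_of G b = orbit_of G b'"
      unfolding t(2) by (rule orbit_shift[OF assms(4) t(1), symmetric])
    show ?thesis unfolding e1 e2 strong_rel_def
    proof
      fix x assume "x \<in> orbit_of G a'"
      then obtain \<rho> where r: "\<rho> \<in> G" "x = perm_act \<rho> a'"
        unfolding orbit_of_def by (rule imageE) simp
      have "?le (perm_act \<rho> a') (perm_act \<rho> b')" by (rule cw_act[OF GF(1)[OF r(1)] ab'(3)])
      then have "?le x (perm_act \<rho> b')" unfolding r(2) .
      moreover have "perm_act \<rho> b' \<in> orbit_of G b'" using r(1) unfolding orbit_of_def by (rule imageI)
      ultimately show "\<exists>y\<in>orbit_of G b'. ?le x y" by blast
    qed
  qed
  have part1: "strong_rel ?le A B \<longleftrightarrow> weak_rel ?le A B"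
    if H: "A \<in> orbit_space G ?S" "B \<in> orbit_space G ?S" for A B
  proof -
    obtain a where a: "A = orbit_of G a" using H(1) unfolding orbit_space_def by (rule imageE) simp
    obtain b where b: "B = orbit_of G b" using H(2) unfolding orbit_space_def by (rule imageE) simp
    have aA: "a \<in> A" using a orbit_self[OF assms(4)] by simp
    show ?thesis
    proof
      assume "strong_rel ?le A B"
      then obtain y where "y \<in> B" "?le a y" using aA unfolding strong_rel_def by blast
      then show "weak_rel ?le A B" using aA unfolding weak_rel_def by blast
    next
      assume "weak_rel ?le A B"
      then show "strong_rel ?le A B" using wk_st[of a b] a b by simp
    qed
  qed
  have antis: "A = B" if H: "A \<in> orbit_space G ?S" "B \<in> orbit_space G ?S"
    "strong_rel ?le A B" "strong_rel ?le B A" for A B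
  proof -
    obtain a b where ab: "A = orbit_of G a" "B = orbit_of G b" "a \<in> ?S" "b \<in> ?S"
      using H by (auto simp: orbit_space_def)
    obtain b' where b': "b' \<in> B" "?le a b'"
      using H(3) orbit_self[OF assms(4)] ab unfolding strong_rel_def by blast
    obtain s where s: "s \<in> G" "b' = perm_act s b" using b' ab by (auto simp: orbit_of_def)
    obtain a' where a': "a' \<in> A" "?le b' a'"
      using H(4) b' unfolding strong_rel_def by blast
    obtain t where t: "t \<in> G" "a' = perm_act t a" using a' ab by (auto simp: orbit_of_def)
    have aa: "?le a (perm_act t a)" using le_trans b' a' t by blast
    have tc: "t \<in> carrier (sym_group n)" using GF(1) t sym_group_carrier by blast
    interpret grp: group "sym_group n" by (rule sym_group_is_group)
    have fin: "finite (carrier (sym_group n))"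
      unfolding sym_group_carrier[abs_def] using finite_permutations[of "{1..n}"] by (simp add: sym_group_def)
    have powc: "t [^]\<^bsub>sym_group n\<^esub> (k::nat) \<in> carrier (sym_group n)" for k
      using tc by simp
    have pw: "?le a (perm_act (t [^]\<^bsub>sym_group n\<^esub> (k::nat)) a)" for k
    proof (induction k)
      case 0 thus ?case using le_refl[OF ab(3)] by (simp add: sym_group_one perm_act_def)
    next
      case (Suc k)
      have p: "(t [^]\<^bsub>sym_group n\<^esub> k) permutes {1..n}" using powc sym_group_carrier by blast
      have "?le (perm_act (t [^]\<^bsub>sym_group n\<^esub> k) a)
                (perm_act (t [^]\<^bsub>sym_group n\<^esub> k) (perm_act t a))"
        by (rule cw_act[OF p aa])
      also have "perm_act (t [^]\<^bsub>sym_group n\<^esub> k) (perm_act t a)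
           = perm_act (t [^]\<^bsub>sym_group n\<^esub> Suc k) a"
      proof -
        have "t [^]\<^bsub>sym_group n\<^esub> Suc k = t \<circ> t [^]\<^bsub>sym_group n\<^esub> k"
          using grp.nat_pow_Suc2[OF tc, of k] by (simp add: sym_group_mult)
        then show ?thesis by (simp add: act_comp)
      qed
      finally show ?case using Suc le_trans by blast
    qed
    obtain m where m: "grp.ord t = Suc m"
      using grp.ord_ge_1[OF fin tc] by (cases "grp.ord t") auto
    have one: "t [^]\<^bsub>sym_group n\<^esub> Suc m = id"
      using grp.pow_ord_eq_1[OF tc] m by (simp add: sym_group_one)
    have tp: "t permutes {1..n}" using GF(1) t by blast
    have "?le (perm_act t a) (perm_act t (perm_act (t [^]\<^bsub>sym_group n\<^esub> m) a))"
      by (rule cw_act[OF tp pw])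
    also have "perm_act t (perm_act (t [^]\<^bsub>sym_group n\<^esub> m) a) = a"
    proof -
      have "t [^]\<^bsub>sym_group n\<^esub> m \<circ> t = id"
        using one grp.nat_pow_Suc[of t m] by (simp add: sym_group_mult)
      then show ?thesis unfolding act_comp by (simp add: perm_act_def)
    qed
    finally have "?le (perm_act t a) a" .
    have aS: "perm_act t a \<in> ?S" using act_in_space tp ab by blast
    have bS: "b' \<in> ?S" using s act_in_space GF(1) ab by blast
    have "?le b' a" using a' t \<open>?le (perm_act t a) a\<close> le_trans by blast
    then have "a = b'" using le_antisym b' ab bS by blast
    then show ?thesis using ab s orbit_shift[OF assms(4)] by simp
  qed
  have part2: "partial_order_on (orbit_space G ?S)
             {(A, B). A \<in> orbit_space G ?S \<and> B \<in> orbit_space G ?S \<and> strong_rel ?le A B}"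
    unfolding partial_order_on_def preorder_on_def
  proof (intro conjI)
    show "{(A, B). A \<in> orbit_space G ?S \<and> B \<in> orbit_space G ?S \<and> strong_rel ?le A B}
          \<subseteq> orbit_space G ?S \<times> orbit_space G ?S" by blast
    show "refl_on (orbit_space G ?S)
             {(A, B). A \<in> orbit_space G ?S \<and> B \<in> orbit_space G ?S \<and> strong_rel ?le A B}"
      unfolding refl_on_def
    proof (intro conjI ballI)
      fix A assume A: "A \<in> orbit_space G ?S"
      then obtain a where "A = orbit_of G a" "a \<in> ?S" by (auto simp: orbit_space_def)
      note Aa = this
      have "strong_rel ?le A A" unfolding strong_rel_def
      proof
        fix x assume x: "x \<in> A"
        have "x \<in> ?S" using orbS[OF Aa(1) x Aa(2)] .
        then have "?le x x" by (rule le_refl)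
        then show "\<exists>b\<in>A. ?le x b" using x by blast
      qed
      then show "(A, A) \<in> {(A, B). A \<in> orbit_space G ?S \<and> B \<in> orbit_space G ?S \<and> strong_rel ?le A B}"
        using A by simp
    qed
    show "trans {(A, B). A \<in> orbit_space G ?S \<and> B \<in> orbit_space G ?S \<and> strong_rel ?le A B}"
    proof (rule transI)
      fix A B C
      assume "(A, B) \<in> {(A, B). A \<in> orbit_space G ?S \<and> B \<in> orbit_space G ?S \<and> strong_rel ?le A B}"
        "(B, C) \<in> {(A, B). A \<in> orbit_space G ?S \<and> B \<in> orbit_space G ?S \<and> strong_rel ?le A B}"
      then have h: "A \<in> orbit_space G ?S" "C \<in> orbit_space G ?S" "strong_rel ?le A B" "strong_rel ?le B C"
        by auto
      have "strong_rel ?le A C" unfolding strong_rel_def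
      proof
        fix x assume "x \<in> A"
        then obtain y where y: "y \<in> B" "?le x y" using h(3) unfolding strong_rel_def by blast
        then obtain z where z: "z \<in> C" "?le y z" using h(4) unfolding strong_rel_def by blast
        show "\<exists>b\<in>C. ?le x b" using z y(2) le_trans by blast
      qed
      then show "(A, C) \<in> {(A, B). A \<in> orbit_space G ?S \<and> B \<in> orbit_space G ?S \<and> strong_rel ?le A B}"
        using h by simp
    qed
    show "antisym {(A, B). A \<in> orbit_space G ?S \<and> B \<in> orbit_space G ?S \<and> strong_rel ?le A B}"
    proof (rule antisymI)
      fix A B
      assume "(A, B) \<in> {(A, B). A \<in> orbit_space G ?S \<and> B \<in> orbit_space G ?S \<and> strong_rel ?le A B}"
        "(B, A) \<in> {(A, B). A \<in> orbit_space G ?S \<and> B \<in> orbit_space G ?S \<and> strong_rel ?le A B}"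
      then show "A = B" by (intro antis) auto
    qed
  qed
  show ?thesis
  proof (intro conjI ballI)
    fix A B assume "A \<in> orbit_space G ?S" "B \<in> orbit_space G ?S"
    then show "strong_rel ?le A B \<longleftrightarrow> weak_rel ?le A B" by (rule part1)
  qed (rule part2)
qed

end
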